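(* Consider any AS graph (with its customer–provider and peer–peer labels), any destination AS $d$, any set $S\subseteq V$ of secure ASes (partial deployment allowed), and any fixed deterministic tie-break rules, and suppose all secure ASes use the same one of the three S*BGP routing models (security first, security second, or security third). Then the routing system has a unique stable routing state, and S*BGP route-selection dynamics are guaranteed to converge to this stable routing state. This holds in each of the three S*BGP routing models.
   Context: An AS graph is an undirected graph $G=(V,E)$ whose vertices are autonomous systems (ASes); every edge is labeled either customer–provider (one endpoint is the customer, the other its provider) or peer–peer. Routing to a fixed destination $d\in V$ is considered. The destination $d$ announces the route "$d$" to its neighbors. Every other AS $s$ selects at most one route to $d$ (a simple AS-level path from $s$ to $d$) among the routes announced to it by its neighbors, and announces the selected route (prepended with itself) according to the export policy (Ex): if the route's next hop is a customer of $s$, it is announced to all neighbors; otherwise only to $s$'s customers. A route at $s$ is a customer/peer/provider route if its next hop is a customer/peer/provider of $s$; its length is its number of hops. An insecure AS ranks available routes by: (LP) customer routes over peer routes over provider routes; then (SP) shorter over longer; then (TB) a fixed AS-specific deterministic tie-break. A set $S\subseteq V$ of ASes is secure; a route is secure iff every AS on it is in $S$ (such routes are learned via S*BGP), otherwise insecure. Each secure AS additionally applies the rule (SecP): prefer a secure route over an insecure route. In the security-first model SecP is applied before LP; in the security-second model between LP and SP; in the security-third model between SP and TB. Routing dynamics: ASes repeatedly (asynchronously) re-run their route selection on the routes currently announced to them and re-announce per Ex. A routing state (the route chosen by each AS $s\ne d$) is stable if no AS that re-runs its route selection changes its route. *)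

theory Defs
  imports Main
begin

text \<open>AS graph: vertex set V; cp x y means "x is a customer of y" (y is a provider of x);
  pr x y means "x and y are peers".
  Following the paper's standing (Gao-Rexford) assumption, there is no customer-provider cycle.\<close>

definition adj :: "('v \<Rightarrow> 'v \<Rightarrow> bool) \<Rightarrow> ('v \<Rightarrow> 'v \<Rightarrow> bool) \<Rightarrow> 'v \<Rightarrow> 'v \<Rightarrow> bool" where
  "adj cp pr x y \<longleftrightarrow> cp x y \<or> cp y x \<or> pr x y"

definition as_graph :: "'v set \<Rightarrow> ('v \<Rightarrow> 'v \<Rightarrow> bool) \<Rightarrow> ('v \<Rightarrow> 'v \<Rightarrow> bool) \<Rightarrow> bool" where
  "as_graph V cp pr \<longleftrightarrow>
     finite V
   \<and> (\<forall>x y. cp x y \<longrightarrow> x \<in> V \<and> y \<in> V \<and> x \<noteq> y)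
   \<and> (\<forall>x y. pr x y \<longrightarrow> x \<in> V \<and> y \<in> V \<and> x \<noteq> y \<and> pr y x \<and> \<not> cp x y \<and> \<not> cp y x)
   \<and> (\<forall>x. (x, x) \<notin> {(a, b). cp a b}\<^sup>+)"

definition is_route :: "('v \<Rightarrow> 'v \<Rightarrow> bool) \<Rightarrow> ('v \<Rightarrow> 'v \<Rightarrow> bool) \<Rightarrow> 'v \<Rightarrow> 'v \<Rightarrow> 'v list \<Rightarrow> bool" where
  "is_route cp pr d s p \<longleftrightarrow> p \<noteq> [] \<and> hd p = s \<and> last p = d \<and> distinct p
     \<and> (\<forall>i. Suc i < length p \<longrightarrow> adj cp pr (p ! i) (p ! Suc i))"

datatype sec_model = SecFirst | SecSecond | SecThird

definition lp_class :: "('v \<Rightarrow> 'v \<Rightarrow> bool) \<Rightarrow> ('v \<Rightarrow> 'v \<Rightarrow> bool) \<Rightarrow> 'v \<Rightarrow> 'v list \<Rightarrow> nat" where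
  "lp_class cp pr s p = (if cp (p ! 1) s then 0 else if pr s (p ! 1) then 1 else 2)"

definition secure_route :: "'v set \<Rightarrow> 'v list \<Rightarrow> bool" where
  "secure_route S p \<longleftrightarrow> set p \<subseteq> S"

definition rank_key :: "('v \<Rightarrow> 'v \<Rightarrow> bool) \<Rightarrow> ('v \<Rightarrow> 'v \<Rightarrow> bool) \<Rightarrow> 'v set \<Rightarrow> sec_model
    \<Rightarrow> 'v \<Rightarrow> 'v list \<Rightarrow> nat list" where
  "rank_key cp pr S m s p =
    (let c = lp_class cp pr s p; l = length p - 1; sc = (if secure_route S p then 0 else 1::nat) in
     if s \<notin> S then [c, l]
     else (case m of SecFirst \<Rightarrow> [sc, c, l] | SecSecond \<Rightarrow> [c, sc, l] | SecThird \<Rightarrow> [c, l, sc]))"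

definition lex_less :: "nat list \<Rightarrow> nat list \<Rightarrow> bool" where
  "lex_less xs ys \<longleftrightarrow> (xs, ys) \<in> lexord {(a, b). a < b}"

definition better :: "('v \<Rightarrow> 'v \<Rightarrow> bool) \<Rightarrow> ('v \<Rightarrow> 'v \<Rightarrow> bool) \<Rightarrow> 'v set \<Rightarrow> sec_model
    \<Rightarrow> ('v \<Rightarrow> 'v list \<Rightarrow> 'v list \<Rightarrow> bool) \<Rightarrow> 'v \<Rightarrow> 'v list \<Rightarrow> 'v list \<Rightarrow> bool" where
  "better cp pr S m tb s p q \<longleftrightarrow>
     lex_less (rank_key cp pr S m s p) (rank_key cp pr S m s q)
   \<or> (rank_key cp pr S m s p = rank_key cp pr S m s q \<and> tb s p q)"

definition strict_total :: "('a \<Rightarrow> 'a \<Rightarrow> bool) \<Rightarrow> bool" where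
  "strict_total R \<longleftrightarrow> (\<forall>x. \<not> R x x) \<and> (\<forall>x y z. R x y \<longrightarrow> R y z \<longrightarrow> R x z)
     \<and> (\<forall>x y. x \<noteq> y \<longrightarrow> R x y \<or> R y x)"

definition cur_route :: "'v \<Rightarrow> ('v \<Rightarrow> 'v list option) \<Rightarrow> 'v \<Rightarrow> 'v list option" where
  "cur_route d r n = (if n = d then Some [d] else r n)"

definition exports :: "('v \<Rightarrow> 'v \<Rightarrow> bool) \<Rightarrow> 'v \<Rightarrow> 'v \<Rightarrow> 'v list \<Rightarrow> 'v \<Rightarrow> bool" where
  "exports cp d n p s \<longleftrightarrow> n = d \<or> cp (p ! 1) n \<or> cp s n"

definition available :: "('v \<Rightarrow> 'v \<Rightarrow> bool) \<Rightarrow> ('v \<Rightarrow> 'v \<Rightarrow> bool) \<Rightarrow> 'v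
    \<Rightarrow> ('v \<Rightarrow> 'v list option) \<Rightarrow> 'v \<Rightarrow> 'v list set" where
  "available cp pr d r s =
     {s # p | n p. adj cp pr s n \<and> cur_route d r n = Some p \<and> exports cp d n p s \<and> s \<notin> set p}"

definition select :: "('v \<Rightarrow> 'v \<Rightarrow> bool) \<Rightarrow> ('v \<Rightarrow> 'v \<Rightarrow> bool) \<Rightarrow> 'v \<Rightarrow> 'v set \<Rightarrow> sec_model
    \<Rightarrow> ('v \<Rightarrow> 'v list \<Rightarrow> 'v list \<Rightarrow> bool) \<Rightarrow> ('v \<Rightarrow> 'v list option) \<Rightarrow> 'v \<Rightarrow> 'v list option" where
  "select cp pr d S m tb r s =
     (let A = available cp pr d r s in
      if A = {} then None
      else Some (THE p. p \<in> A \<and> (\<forall>q\<in>A. q \<noteq> p \<longrightarrow> better cp pr S m tb s p q)))"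

definition stable_state :: "'v set \<Rightarrow> ('v \<Rightarrow> 'v \<Rightarrow> bool) \<Rightarrow> ('v \<Rightarrow> 'v \<Rightarrow> bool) \<Rightarrow> 'v \<Rightarrow> 'v set \<Rightarrow> sec_model
    \<Rightarrow> ('v \<Rightarrow> 'v list \<Rightarrow> 'v list \<Rightarrow> bool) \<Rightarrow> ('v \<Rightarrow> 'v list option) \<Rightarrow> bool" where
  "stable_state V cp pr d S m tb r \<longleftrightarrow>
     (\<forall>s. r s = (if s \<in> V \<and> s \<noteq> d then select cp pr d S m tb r s else None))"

definition routing_state :: "'v set \<Rightarrow> ('v \<Rightarrow> 'v \<Rightarrow> bool) \<Rightarrow> ('v \<Rightarrow> 'v \<Rightarrow> bool) \<Rightarrow> 'v
    \<Rightarrow> ('v \<Rightarrow> 'v list option) \<Rightarrow> bool" where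
  "routing_state V cp pr d r \<longleftrightarrow>
     (\<forall>s. (s \<notin> V \<or> s = d \<longrightarrow> r s = None) \<and> (\<forall>p. r s = Some p \<longrightarrow> is_route cp pr d s p))"

primrec run :: "'v set \<Rightarrow> ('v \<Rightarrow> 'v \<Rightarrow> bool) \<Rightarrow> ('v \<Rightarrow> 'v \<Rightarrow> bool) \<Rightarrow> 'v \<Rightarrow> 'v set \<Rightarrow> sec_model
    \<Rightarrow> ('v \<Rightarrow> 'v list \<Rightarrow> 'v list \<Rightarrow> bool) \<Rightarrow> ('v \<Rightarrow> 'v list option) \<Rightarrow> (nat \<Rightarrow> 'v set)
    \<Rightarrow> nat \<Rightarrow> 'v \<Rightarrow> 'v list option" where
  "run V cp pr d S m tb r0 \<sigma> 0 = r0"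
| "run V cp pr d S m tb r0 \<sigma> (Suc t) =
     (\<lambda>s. if s \<in> \<sigma> t \<and> s \<in> V \<and> s \<noteq> d
          then select cp pr d S m tb (run V cp pr d S m tb r0 \<sigma> t) s
          else run V cp pr d S m tb r0 \<sigma> t s)"

definition fair :: "'v set \<Rightarrow> 'v \<Rightarrow> (nat \<Rightarrow> 'v set) \<Rightarrow> bool" where
  "fair V d \<sigma> \<longleftrightarrow> (\<forall>s\<in>V - {d}. \<forall>t. \<exists>t'\<ge>t. s \<in> \<sigma> t')"

end

theory Submission imports Defs begin

locale bgp =
  fixes V :: "'v set" and cp pr :: "'v \<Rightarrow> 'v \<Rightarrow> bool" and d :: 'v and S :: "'v set"
    and m :: sec_model and tb :: "'v \<Rightarrow> 'v list \<Rightarrow> 'v list \<Rightarrow> bool"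
  assumes G: "as_graph V cp pr" and dV: "d \<in> V"
    and TB: "\<forall>s. strict_total (tb s)"
begin

abbreviation X where "X r0 \<sigma> t \<equiv> run V cp pr d S m tb r0 \<sigma> t"
definition good where "good r0 \<sigma> \<longleftrightarrow> routing_state V cp pr d r0 \<and> fair V d \<sigma>"
definition EV where "EV P \<longleftrightarrow> (\<forall>r0 \<sigma>. good r0 \<sigma> \<longrightarrow> eventually (\<lambda>t. P (X r0 \<sigma> t)) sequentially)"
abbreviation cr where "cr r n \<equiv> cur_route d r n"
abbreviation AV where "AV r u \<equiv> available cp pr d r u"
definition Inv where "Inv r \<longleftrightarrow> (\<forall>u p. r u = Some p \<longrightarrow> u \<in> V \<and> u \<noteq> d \<and> (\<exists>q. p = u # q \<and> q \<noteq> []))"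
abbreviation bet where "bet u \<equiv> better cp pr S m tb u"
definition bestOf where "bestOf u A = (THE p. p \<in> A \<and> (\<forall>q\<in>A. q \<noteq> p \<longrightarrow> bet u p q))"
definition FX where "FX u v \<longleftrightarrow> EV (\<lambda>r. cr r u = v)"
abbreviation sel where "sel r u \<equiv> select cp pr d S m tb r u"

lemma adj_V: "adj cp pr x y \<Longrightarrow> x \<in> V \<and> y \<in> V"
  using G unfolding as_graph_def adj_def by blast

lemma cp_V: "cp x y \<Longrightarrow> x \<in> V \<and> y \<in> V \<and> x \<noteq> y"
  using G unfolding as_graph_def by blast

lemma cp_asym: "cp x y \<Longrightarrow> \<not> cp y x"
proof
  assume a: "cp x y" "cp y x"
  have "(x,y) \<in> {(a, b). cp a b}\<^sup>+" using a(1) by (intro r_into_trancl) simp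
  moreover have "(y,x) \<in> {(a, b). cp a b}" using a(2) by simp
  ultimately have "(x,x) \<in> {(a, b). cp a b}\<^sup>+" by (rule trancl_into_trancl)
  with G show False unfolding as_graph_def by blast
qed

lemma pr_not_cp: "pr x y \<Longrightarrow> \<not> cp x y \<and> \<not> cp y x"
  using G unfolding as_graph_def by blast

lemma finite_cp: "finite {(a, b). cp a b}"
proof -
  have "{(a, b). cp a b} \<subseteq> V \<times> V" using cp_V by auto
  moreover have "finite V" using G unfolding as_graph_def by blast
  ultimately show ?thesis by (meson finite_SigmaI finite_subset)
qed

lemma acyc: "acyclic {(a, b). cp a b}"
  using G unfolding as_graph_def acyclic_def by blast

lemma wf_cp: "wf {(a, b). cp a b}"
  by (rule finite_acyclic_wf[OF finite_cp acyc])

lemma wf_cp_conv: "wf ({(a, b). cp a b}\<inverse>)"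
  by (rule finite_acyclic_wf_converse[OF finite_cp acyc])

lemma finV: "finite V" using G unfolding as_graph_def by blast

lemma lex_props:
  "\<not> lex_less xs xs"
  "lex_less xs ys \<Longrightarrow> lex_less ys zs \<Longrightarrow> lex_less xs zs"
  "lex_less xs ys \<or> xs = ys \<or> lex_less ys xs"
  unfolding lex_less_def
    apply (rule lexord_irreflexive, simp)
   apply (erule lexord_trans, assumption, simp add: trans_def)
  apply (rule lexord_linear, auto)
  done

lemma tbs: "\<not> tb u p p" "tb u p q \<Longrightarrow> tb u q r \<Longrightarrow> tb u p r" "p \<noteq> q \<Longrightarrow> tb u p q \<or> tb u q p"
  using TB unfolding strict_total_def by blast+

lemma bet_irrefl: "\<not> bet u p p"
  unfolding better_def using tbs(1) lex_props(1) by simp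

lemma bet_trans: "bet u p q \<Longrightarrow> bet u q r \<Longrightarrow> bet u p r"
  unfolding better_def
  apply (elim disjE conjE)
  using lex_props(2) tbs(2) by simp_all

lemma bet_total: "p \<noteq> q \<Longrightarrow> bet u p q \<or> bet u q p"
  unfolding better_def using lex_props(3) tbs(3) by blast

lemma best_exists: "finite A \<Longrightarrow> A \<noteq> {} \<Longrightarrow> \<exists>p\<in>A. \<forall>q\<in>A. q \<noteq> p \<longrightarrow> bet u p q"
proof (induction A rule: finite_ne_induct)
  case (singleton x) then show ?case by auto
next
  case (insert x F)
  then obtain p where p: "p \<in> F" "\<forall>q\<in>F. q \<noteq> p \<longrightarrow> bet u p q" by blast
  have "x \<noteq> p" using p insert by auto
  then consider "bet u x p" | "bet u p x" using bet_total by blast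
  then show ?case
  proof cases
    case 1 then show ?thesis using p bet_trans by (metis insertCI insertE)
  next
    case 2 then show ?thesis using p by blast
  qed
qed

lemma best_unique: "p \<in> A \<Longrightarrow> (\<forall>q\<in>A. q \<noteq> p \<longrightarrow> bet u p q) \<Longrightarrow> p' \<in> A \<Longrightarrow> (\<forall>q\<in>A. q \<noteq> p' \<longrightarrow> bet u p' q) \<Longrightarrow> p = p'"
  using bet_trans bet_irrefl by metis

lemma bestOf: assumes "finite A" "A \<noteq> {}"
  shows "bestOf u A \<in> A" "\<forall>q\<in>A. q \<noteq> bestOf u A \<longrightarrow> bet u (bestOf u A) q"
proof -
  obtain p where p: "p \<in> A" "\<forall>q\<in>A. q \<noteq> p \<longrightarrow> bet u p q" using best_exists[OF assms] by blast
  have "bestOf u A = p" unfolding bestOf_def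
    by (rule the_equality) (use p best_unique in blast)+
  then show "bestOf u A \<in> A" "\<forall>q\<in>A. q \<noteq> bestOf u A \<longrightarrow> bet u (bestOf u A) q" using p by auto
qed

lemma best_sub: assumes "finite A" "B \<subseteq> A" "B \<noteq> {}" "\<forall>p\<in>B. \<forall>q\<in>A - B. bet u p q"
  shows "bestOf u A = bestOf u B"
proof -
  have fB: "finite B" using assms finite_subset by blast
  note b = bestOf[OF fB assms(3), of u]
  have "\<forall>q\<in>A. q \<noteq> bestOf u B \<longrightarrow> bet u (bestOf u B) q" using b assms(4) by blast
  moreover have "bestOf u B \<in> A" using b assms(2) by blast
  moreover note a = bestOf[OF assms(1), of u]
  ultimately show ?thesis using best_unique a assms(2,3) by blast
qed

lemma finite_AV: "finite (AV r u)"
proof -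
  have "AV r u \<subseteq> (\<lambda>n. u # the (cr r n)) ` V"
  proof
    fix x assume "x \<in> AV r u"
    then obtain n p where "x = u # p" "adj cp pr u n" "cr r n = Some p" unfolding available_def by blast
    then show "x \<in> (\<lambda>n. u # the (cr r n)) ` V" using adj_V by force
  qed
  then show ?thesis using finV finite_subset by blast
qed

lemma sel_eq: "sel r u = (if AV r u = {} then None else Some (bestOf u (AV r u)))"
  unfolding select_def bestOf_def Let_def by simp

lemma sel_in: "sel r u = Some q \<Longrightarrow> q \<in> AV r u"
  using bestOf(1)[OF finite_AV] sel_eq by (metis option.distinct(1) option.inject)

lemma AV_elem: assumes "q \<in> AV r u"
  obtains n p where "q = u # p" "adj cp pr u n" "cr r n = Some p" "exports cp d n p u" "u \<notin> set p"
  using assms unfolding available_def by blast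

lemma cr_Inv: "Inv r \<Longrightarrow> cr r n = Some p \<Longrightarrow> \<exists>q. p = n # q"
  unfolding Inv_def cur_route_def by (cases "n = d") auto

lemma cr_nd: "n \<noteq> d \<Longrightarrow> cr r n = r n"
  unfolding cur_route_def by simp

lemma cr_d: "cr r d = Some [d]"
  unfolding cur_route_def by simp

lemma AV_hop: "Inv r \<Longrightarrow> u # p \<in> AV r u \<Longrightarrow> cr r n = Some p \<Longrightarrow> (u # p) ! 1 = n"
  using cr_Inv by fastforce

lemma AV_elem2: assumes "Inv r" "q \<in> AV r u"
  obtains n p where "q = u # p" "adj cp pr u n" "cr r n = Some p" "exports cp d n p u" "u \<notin> set p" "q ! 1 = n" "hd p = n"
proof -
  obtain n p where a: "q = u # p" "adj cp pr u n" "cr r n = Some p" "exports cp d n p u" "u \<notin> set p"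
    using AV_elem[OF assms(2)] by blast
  obtain z where "p = n # z" using cr_Inv[OF assms(1) a(3)] by blast
  then show ?thesis using that a by simp
qed

lemma Inv_run: assumes "good r0 \<sigma>" shows "Inv (X r0 \<sigma> t)"
proof (induction t)
  case 0
  show ?case unfolding Inv_def
  proof (intro allI impI)
    fix u p assume a: "X r0 \<sigma> 0 u = Some p"
    then have rs: "r0 u = Some p" by simp
    have u: "u \<in> V" "u \<noteq> d" using assms rs unfolding good_def routing_state_def by fastforce+
    have ir: "is_route cp pr d u p" using assms rs unfolding good_def routing_state_def by blast
    then have "p \<noteq> []" "hd p = u" "last p = d" unfolding is_route_def by auto
    then obtain q where "p = u # q" by (cases p) auto
    moreover have "q \<noteq> []" using calculation \<open>last p = d\<close> u by auto
    ultimately show "u \<in> V \<and> u \<noteq> d \<and> (\<exists>q. p = u # q \<and> q \<noteq> [])" using u by blast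
  qed
next
  case (Suc t)
  show ?case unfolding Inv_def
  proof (intro allI impI)
    fix u p assume a: "X r0 \<sigma> (Suc t) u = Some p"
    show "u \<in> V \<and> u \<noteq> d \<and> (\<exists>q. p = u # q \<and> q \<noteq> [])"
    proof (cases "u \<in> \<sigma> t \<and> u \<in> V \<and> u \<noteq> d")
      case True
      then have "sel (X r0 \<sigma> t) u = Some p" using a by simp
      then have "p \<in> AV (X r0 \<sigma> t) u" by (rule sel_in)
      then obtain n q where "p = u # q" "cr (X r0 \<sigma> t) n = Some q"
        by (rule AV_elem)
      moreover then obtain z where "q = n # z" using cr_Inv Suc by blast
      ultimately show ?thesis using True by blast
    next
      case False
      then have "X r0 \<sigma> t u = Some p" using a by (auto split: if_split_asm)
      then show ?thesis using Suc unfolding Inv_def by blast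
    qed
  qed
qed

lemma good_canon: "good (\<lambda>_. None) (\<lambda>_. UNIV)"
  unfolding good_def routing_state_def fair_def by auto

lemma EV_mono: "EV P \<Longrightarrow> (\<And>r. Inv r \<Longrightarrow> P r \<Longrightarrow> Q r) \<Longrightarrow> EV Q"
  unfolding EV_def
proof (intro allI impI)
  fix r0 \<sigma> assume a: "\<forall>r0 \<sigma>. good r0 \<sigma> \<longrightarrow> eventually (\<lambda>t. P (X r0 \<sigma> t)) sequentially"
    "\<And>r. Inv r \<Longrightarrow> P r \<Longrightarrow> Q r" "good r0 \<sigma>"
  then have "eventually (\<lambda>t. P (X r0 \<sigma> t)) sequentially" by blast
  then show "eventually (\<lambda>t. Q (X r0 \<sigma> t)) sequentially"
    by (rule eventually_mono) (use a Inv_run in blast)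
qed

lemma EV_True: "EV (\<lambda>r. True)" unfolding EV_def by simp

lemma EV_I: "(\<And>r. Inv r \<Longrightarrow> Q r) \<Longrightarrow> EV Q"
  using EV_mono[OF EV_True] by blast

lemma EV_conj: "EV P \<Longrightarrow> EV Q \<Longrightarrow> EV (\<lambda>r. P r \<and> Q r)"
  unfolding EV_def using eventually_conj by blast

lemma EV_ball: "finite A \<Longrightarrow> \<forall>x\<in>A. EV (P x) \<Longrightarrow> EV (\<lambda>r. \<forall>x\<in>A. P x r)"
  unfolding EV_def
proof (intro allI impI)
  fix r0 \<sigma> assume "finite A" "\<forall>x\<in>A. \<forall>r0 \<sigma>. good r0 \<sigma> \<longrightarrow> eventually (\<lambda>t. P x (X r0 \<sigma> t)) sequentially"
    "good r0 \<sigma>"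
  then show "eventually (\<lambda>t. \<forall>x\<in>A. P x (X r0 \<sigma> t)) sequentially"
    using eventually_ball_finite[of A "\<lambda>t x. P x (X r0 \<sigma> t)"] by blast
qed

lemma EV_exists: "EV P \<Longrightarrow> \<exists>r. Inv r \<and> P r"
proof -
  assume "EV P"
  then have "eventually (\<lambda>t. P (X (\<lambda>_. None) (\<lambda>_. UNIV) t)) sequentially"
    using good_canon unfolding EV_def by blast
  then obtain t where "P (X (\<lambda>_. None) (\<lambda>_. UNIV) t)" unfolding eventually_sequentially by blast
  then show ?thesis using Inv_run[OF good_canon] by blast
qed

lemma FX_unique: "FX u v \<Longrightarrow> FX u w \<Longrightarrow> v = w"
  unfolding FX_def using EV_conj EV_exists by fastforce

lemma ev_sel: assumes "u \<in> V" "u \<noteq> d" "EV (\<lambda>r. Q (sel r u))" shows "EV (\<lambda>r. Q (r u))"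
  unfolding EV_def
proof (intro allI impI)
  fix r0 \<sigma> assume g: "good r0 \<sigma>"
  then obtain T where T: "\<forall>t\<ge>T. Q (sel (X r0 \<sigma> t) u)"
    using assms(3) unfolding EV_def eventually_sequentially by blast
  obtain t1 where t1: "t1 \<ge> T" "u \<in> \<sigma> t1"
    using g assms(1,2) unfolding good_def fair_def by blast
  have "Q (X r0 \<sigma> (Suc t1 + k) u)" for k
  proof (induction k)
    case 0 then show ?case using t1 T assms(1,2) by simp
  next
    case (Suc k)
    have q: "Q (sel (X r0 \<sigma> (Suc t1 + k)) u)" using T t1(1) by (meson le_add1 le_trans le_SucI)
    have e: "X r0 \<sigma> (Suc (Suc t1 + k)) u = (if u \<in> \<sigma> (Suc t1 + k) then sel (X r0 \<sigma> (Suc t1 + k)) u else X r0 \<sigma> (Suc t1 + k) u)"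
      using assms(1,2) by (simp only: run.simps) simp
    have "Q (X r0 \<sigma> (Suc (Suc t1 + k)) u)" unfolding e using q Suc by simp
    then show ?case by simp
  qed
  then show "eventually (\<lambda>t. Q (X r0 \<sigma> t u)) sequentially"
    unfolding eventually_sequentially by (metis le_add_diff_inverse)
qed


definition custR where "custR u p \<longleftrightarrow> u = d \<or> cp (p!1) u"
definition xpf where "xpf U n u v = (case v of None \<Rightarrow> None | Some p \<Rightarrow> if exports cp d n p u \<and> set p \<subseteq> U then Some p else None)"
abbreviation XP where "XP U r n u \<equiv> xpf U n u (cr r n)"
definition csettled where "csettled U c \<longleftrightarrow> (\<exists>p. set p \<subseteq> U \<and> custR c p \<and> FX c (Some p)) \<or> EV (\<lambda>r. \<forall>p. cr r c = Some p \<longrightarrow> \<not>(set p \<subseteq> U \<and> custR c p))"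
definition CF where "CF U r u \<longleftrightarrow> (\<forall>p\<in>AV r u. \<forall>q\<in>AV r u. (set p \<subseteq> U \<and> cp (p!1) u) \<and> \<not>(set q \<subseteq> U \<and> cp (q!1) u) \<longrightarrow> bet u p q)"
definition ssettled where "ssettled U u \<longleftrightarrow> (\<exists>v. FX u v) \<or> EV (\<lambda>r. (\<forall>q\<in>AV r u. \<not> set q \<subseteq> U) \<and> (\<forall>p. cr r u = Some p \<longrightarrow> \<not> set p \<subseteq> U))"
definition PF where "PF U r u \<longleftrightarrow> (\<forall>p\<in>AV r u. \<forall>q\<in>AV r u. set p \<subseteq> U \<and> \<not> set q \<subseteq> U \<longrightarrow> bet u p q)"

lemma fixed_csettled: "FX u v \<Longrightarrow> csettled U u"
proof (cases v)
  case None
  assume "FX u v"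
  then have "EV (\<lambda>r. \<forall>p. cr r u = Some p \<longrightarrow> \<not>(set p \<subseteq> U \<and> custR u p))"
    unfolding FX_def None by (rule EV_mono) simp
  then show ?thesis unfolding csettled_def by blast
next
  case (Some p)
  assume f: "FX u v"
  show ?thesis
  proof (cases "set p \<subseteq> U \<and> custR u p")
    case True then show ?thesis using f Some unfolding csettled_def by blast
  next
    case False
    have "EV (\<lambda>r. \<forall>p. cr r u = Some p \<longrightarrow> \<not>(set p \<subseteq> U \<and> custR u p))"
      using f unfolding FX_def Some by (rule EV_mono) (use False in simp)
    then show ?thesis unfolding csettled_def by blast
  qed
qed

lemma exports_custR: "\<not> cp u c \<Longrightarrow> exports cp d c p u \<longleftrightarrow> custR c p"
  unfolding exports_def custR_def by blast

lemma csettled_XP: assumes "csettled U c" "\<not> cp u c" shows "\<exists>e. EV (\<lambda>r. XP U r c u = e)"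
  using assms(1) unfolding csettled_def
proof (elim disjE exE conjE)
  fix p assume a: "set p \<subseteq> U" "custR c p" "FX c (Some p)"
  have "EV (\<lambda>r. XP U r c u = Some p)" using a(3) unfolding FX_def
    by (rule EV_mono) (use a in \<open>auto simp: xpf_def exports_custR[OF assms(2)]\<close>)
  then show ?thesis by blast
next
  assume "EV (\<lambda>r. \<forall>p. cr r c = Some p \<longrightarrow> \<not> (set p \<subseteq> U \<and> custR c p))"
  then have "EV (\<lambda>r. XP U r c u = None)"
    by (rule EV_mono) (auto simp: xpf_def exports_custR[OF assms(2)] split: option.splits)
  then show ?thesis by blast
qed

lemma FX_XP: "FX n v \<Longrightarrow> \<exists>e. EV (\<lambda>r. XP U r n u = e)"
  unfolding FX_def by (rule exI, erule EV_mono) simp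

lemma AV_U: assumes "Inv r" "u \<in> U"
  shows "{q \<in> AV r u. set q \<subseteq> U \<and> P (q!1)} = {u # p | n p. adj cp pr u n \<and> P n \<and> XP U r n u = Some p \<and> u \<notin> set p}"
proof (intro equalityI subsetI)
  fix q assume "q \<in> {q \<in> AV r u. set q \<subseteq> U \<and> P (q!1)}"
  then have q: "q \<in> AV r u" "set q \<subseteq> U" "P (q!1)" by auto
  obtain n p where a: "q = u # p" "adj cp pr u n" "cr r n = Some p" "exports cp d n p u" "u \<notin> set p" "q ! 1 = n"
    using AV_elem2[OF assms(1) q(1)] by metis
  then show "q \<in> {u # p | n p. adj cp pr u n \<and> P n \<and> XP U r n u = Some p \<and> u \<notin> set p}"
    using q by (auto simp: xpf_def)
next
  fix q assume "q \<in> {u # p | n p. adj cp pr u n \<and> P n \<and> XP U r n u = Some p \<and> u \<notin> set p}"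
  then obtain n p where a: "q = u # p" "adj cp pr u n" "P n" "XP U r n u = Some p" "u \<notin> set p" by blast
  then have b: "cr r n = Some p" "exports cp d n p u" "set p \<subseteq> U"
    by (auto simp: xpf_def split: option.splits if_splits)
  have "q \<in> AV r u" unfolding available_def using a b by blast
  moreover obtain z where "p = n # z" using cr_Inv[OF assms(1) b(1)] by blast
  ultimately show "q \<in> {q \<in> AV r u. set q \<subseteq> U \<and> P (q!1)}" using a b assms(2) by auto
qed

lemma EV_choice: assumes "finite N" "\<forall>n\<in>N. \<exists>e. EV (\<lambda>r. F r n = e)"
  shows "\<exists>e. EV (\<lambda>r. \<forall>n\<in>N. F r n = e n)"
proof -
  obtain e where "\<forall>n\<in>N. EV (\<lambda>r. F r n = e n)" using assms(2) by metis
  then have "EV (\<lambda>r. \<forall>n\<in>N. F r n = e n)" using EV_ball[OF assms(1), of "\<lambda>n r. F r n = e n"] by blast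
  then show ?thesis by blast
qed

lemma fin_nb: "finite {n. adj cp pr u n \<and> P n}"
  using finV adj_V by (metis (mono_tags, lifting) mem_Collect_eq rev_finite_subset subsetI)


lemma pick_best:
  assumes C: "\<forall>p\<in>AV r u. \<forall>q\<in>AV r u. Pp p \<and> \<not> Pp q \<longrightarrow> bet u p q"
    and eq: "{q \<in> AV r u. Pp q} = B" and ne: "B \<noteq> {}"
  shows "sel r u = Some (bestOf u B) \<and> Pp (bestOf u B)"
proof -
  have sub: "B \<subseteq> AV r u" using eq by blast
  then have ne2: "AV r u \<noteq> {}" using ne by blast
  have "bestOf u (AV r u) = bestOf u B"
    by (rule best_sub[OF finite_AV sub ne]) (use C eq in blast)
  moreover have "bestOf u B \<in> B" using bestOf(1)[OF finite_subset[OF sub finite_AV] ne] .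
  ultimately show ?thesis using sel_eq ne2 eq by auto
qed

lemma phaseC:
  assumes H: "\<forall>u\<in>V - {d}. u \<in> U \<longrightarrow> (\<exists>v. FX u v) \<or> EV (\<lambda>r. CF U r u)"
  shows "c \<in> V \<Longrightarrow> csettled U c"
proof (induction c rule: wf_induct_rule[OF wf_cp])
  case (1 c)
  show ?case
  proof (cases "c = d")
    case True
    show ?thesis
    proof (cases "d \<in> U")
      case True
      have "FX d (Some [d])" unfolding FX_def by (rule EV_I) (simp add: cr_d)
      then show ?thesis unfolding csettled_def custR_def using True \<open>c = d\<close>
        by (intro disjI1 exI[of _ "[d]"]) auto
    next
      case False
      have "EV (\<lambda>r. \<forall>p. cr r d = Some p \<longrightarrow> \<not>(set p \<subseteq> U \<and> custR d p))"
        by (rule EV_I) (use False in \<open>simp add: cr_d\<close>)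
      then show ?thesis unfolding csettled_def using \<open>c = d\<close> by blast
    qed
  next
    case cnd: False
    show ?thesis
    proof (cases "c \<in> U")
      case False
      have "EV (\<lambda>r. \<forall>p. cr r c = Some p \<longrightarrow> \<not>(set p \<subseteq> U \<and> custR c p))"
        by (rule EV_I) (use False cr_Inv in fastforce)
      then show ?thesis unfolding csettled_def by blast
    next
      case cU: True
      from H cU cnd 1(2) consider "\<exists>v. FX c v" | "EV (\<lambda>r. CF U r c)" by blast
      then show ?thesis
      proof cases
        case 1 then show ?thesis using fixed_csettled by blast
      next
        case cf: 2
        define N where "N = {n. adj cp pr c n \<and> cp n c}"
        have fN: "finite N" unfolding N_def by (rule fin_nb)
        have "\<forall>n\<in>N. \<exists>e. EV (\<lambda>r. XP U r n c = e)"
        proof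
          fix n assume "n \<in> N"
          then have "cp n c" unfolding N_def by blast
          then have "csettled U n" using 1(1) cp_V by blast
          then show "\<exists>e. EV (\<lambda>r. XP U r n c = e)" using csettled_XP cp_asym \<open>cp n c\<close> by blast
        qed
        then obtain e where e: "EV (\<lambda>r. \<forall>n\<in>N. XP U r n c = e n)" using EV_choice[OF fN, of "\<lambda>r n. XP U r n c"] by blast
        define B where "B = {c # p | n p. adj cp pr c n \<and> cp n c \<and> e n = Some p \<and> c \<notin> set p}"
        have eq: "EV (\<lambda>r. {q \<in> AV r c. set q \<subseteq> U \<and> cp (q!1) c} = B)"
        proof (rule EV_mono[OF e])
          fix r assume r: "Inv r" "\<forall>n\<in>N. XP U r n c = e n"
          show "{q \<in> AV r c. set q \<subseteq> U \<and> cp (q!1) c} = B"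
            unfolding AV_U[OF r(1) cU, of "\<lambda>n. cp n c"] B_def using r(2) unfolding N_def by (auto; metis)
        qed
        show ?thesis
        proof (cases "B = {}")
          case False
          define b where "b = bestOf c B"
          have "EV (\<lambda>r. sel r c = Some b \<and> (set b \<subseteq> U \<and> cp (b!1) c))"
          proof (rule EV_mono[OF EV_conj[OF eq cf]])
            fix r assume r: "Inv r" "{q \<in> AV r c. set q \<subseteq> U \<and> cp (q!1) c} = B \<and> CF U r c"
            show "sel r c = Some b \<and> (set b \<subseteq> U \<and> cp (b!1) c)" unfolding b_def
              by (rule pick_best[where Pp="\<lambda>q. set q \<subseteq> U \<and> cp (q!1) c"]) (use r False in \<open>auto simp: CF_def\<close>)
          qed
          then have ev: "EV (\<lambda>r. r c = Some b \<and> (set b \<subseteq> U \<and> cp (b!1) c))"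
            using ev_sel[OF 1(2) cnd, of "\<lambda>v. v = Some b \<and> (set b \<subseteq> U \<and> cp (b!1) c)"] by blast
          then have "set b \<subseteq> U \<and> cp (b!1) c" using EV_exists by blast
          moreover have "FX c (Some b)" unfolding FX_def
            by (rule EV_mono[OF ev]) (simp add: cr_nd[OF cnd])
          ultimately show ?thesis unfolding csettled_def custR_def by blast
        next
          case True
          have "EV (\<lambda>r. \<forall>q. sel r c = Some q \<longrightarrow> \<not>(set q \<subseteq> U \<and> custR c q))"
          proof (rule EV_mono[OF eq])
            fix r assume r: "Inv r" "{q \<in> AV r c. set q \<subseteq> U \<and> cp (q!1) c} = B"
            show "\<forall>q. sel r c = Some q \<longrightarrow> \<not>(set q \<subseteq> U \<and> custR c q)"
              using sel_in r True cnd unfolding custR_def by blast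
          qed
          then have "EV (\<lambda>r. \<forall>q. r c = Some q \<longrightarrow> \<not>(set q \<subseteq> U \<and> custR c q))"
            using ev_sel[OF 1(2) cnd, of "\<lambda>v. \<forall>q. v = Some q \<longrightarrow> \<not>(set q \<subseteq> U \<and> custR c q)"] by blast
          then have "EV (\<lambda>r. \<forall>q. cr r c = Some q \<longrightarrow> \<not>(set q \<subseteq> U \<and> custR c q))"
            by (rule EV_mono) (simp add: cr_nd[OF cnd])
          then show ?thesis unfolding csettled_def by blast
        qed
      qed
    qed
  qed
qed


lemma phaseP:
  assumes C: "\<forall>c\<in>V. csettled U c"
    and H: "\<forall>u\<in>V - {d}. u \<in> U \<longrightarrow> EV (\<lambda>r. PF U r u)"
  shows "u \<in> V \<Longrightarrow> ssettled U u"
proof (induction u rule: wf_induct_rule[OF wf_cp_conv])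
  case (1 u)
  show ?case
  proof (cases "u = d")
    case True
    have "FX d (Some [d])" unfolding FX_def by (rule EV_I) (simp add: cr_d)
    then show ?thesis unfolding ssettled_def using True by blast
  next
    case und: False
    show ?thesis
    proof (cases "u \<in> U")
      case False
      have "EV (\<lambda>r. (\<forall>q\<in>AV r u. \<not> set q \<subseteq> U) \<and> (\<forall>p. cr r u = Some p \<longrightarrow> \<not> set p \<subseteq> U))"
      proof (rule EV_I)
        fix r assume r: "Inv r"
        have "\<forall>q\<in>AV r u. \<not> set q \<subseteq> U" using False by (auto elim: AV_elem)
        moreover have "\<forall>p. cr r u = Some p \<longrightarrow> \<not> set p \<subseteq> U" using False cr_Inv[OF r] by fastforce
        ultimately show "(\<forall>q\<in>AV r u. \<not> set q \<subseteq> U) \<and> (\<forall>p. cr r u = Some p \<longrightarrow> \<not> set p \<subseteq> U)" by blast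
      qed
      then show ?thesis unfolding ssettled_def by blast
    next
      case uU: True
      define N where "N = {n. adj cp pr u n \<and> True}"
      have fN: "finite N" unfolding N_def by (rule fin_nb)
      have "\<forall>n\<in>N. \<exists>e. EV (\<lambda>r. XP U r n u = e)"
      proof
        fix n assume "n \<in> N"
        then have nV: "n \<in> V" unfolding N_def using adj_V by blast
        show "\<exists>e. EV (\<lambda>r. XP U r n u = e)"
        proof (cases "cp u n")
          case True
          then have "ssettled U n" using 1(1) nV by blast
          then show ?thesis unfolding ssettled_def
          proof (elim disjE exE)
            fix v assume "FX n v" then show ?thesis by (rule FX_XP)
          next
            assume "EV (\<lambda>r. (\<forall>q\<in>AV r n. \<not> set q \<subseteq> U) \<and> (\<forall>p. cr r n = Some p \<longrightarrow> \<not> set p \<subseteq> U))"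
            then have "EV (\<lambda>r. XP U r n u = None)"
              by (rule EV_mono) (auto simp: xpf_def split: option.splits)
            then show ?thesis by blast
          qed
        next
          case False
          then show ?thesis using csettled_XP C nV by blast
        qed
      qed
      then obtain e where e: "EV (\<lambda>r. \<forall>n\<in>N. XP U r n u = e n)"
        using EV_choice[OF fN, of "\<lambda>r n. XP U r n u"] by blast
      define B where "B = {u # p | n p. adj cp pr u n \<and> True \<and> e n = Some p \<and> u \<notin> set p}"
      have eq: "EV (\<lambda>r. {q \<in> AV r u. set q \<subseteq> U \<and> True} = B)"
      proof (rule EV_mono[OF e])
        fix r assume r: "Inv r" "\<forall>n\<in>N. XP U r n u = e n"
        show "{q \<in> AV r u. set q \<subseteq> U \<and> True} = B"
          unfolding AV_U[OF r(1) uU, of "\<lambda>n. True"] B_def using r(2) unfolding N_def by (auto; metis)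
      qed
      show ?thesis
      proof (cases "B = {}")
        case False
        define b where "b = bestOf u B"
        have pf: "EV (\<lambda>r. PF U r u)" using H 1(2) und uU by blast
        have "EV (\<lambda>r. sel r u = Some b \<and> (set b \<subseteq> U \<and> True))"
        proof (rule EV_mono[OF EV_conj[OF eq pf]])
          fix r assume r: "Inv r" "{q \<in> AV r u. set q \<subseteq> U \<and> True} = B \<and> PF U r u"
          show "sel r u = Some b \<and> (set b \<subseteq> U \<and> True)" unfolding b_def
            by (rule pick_best[where Pp="\<lambda>q. set q \<subseteq> U \<and> True"]) (use r False in \<open>auto simp: PF_def\<close>)
        qed
        then have ev: "EV (\<lambda>r. r u = Some b)"
          using ev_sel[OF 1(2) und, of "\<lambda>v. v = Some b"] by (simp add: EV_mono)
        have "FX u (Some b)" unfolding FX_def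
          by (rule EV_mono[OF ev]) (simp add: cr_nd[OF und])
        then show ?thesis unfolding ssettled_def by blast
      next
        case True
        have a: "EV (\<lambda>r. \<forall>q\<in>AV r u. \<not> set q \<subseteq> U)"
          by (rule EV_mono[OF eq]) (use True in blast)
        have "EV (\<lambda>r. \<forall>q. sel r u = Some q \<longrightarrow> \<not> set q \<subseteq> U)"
          by (rule EV_mono[OF a]) (use sel_in in blast)
        then have "EV (\<lambda>r. \<forall>q. r u = Some q \<longrightarrow> \<not> set q \<subseteq> U)"
          using ev_sel[OF 1(2) und, of "\<lambda>v. \<forall>q. v = Some q \<longrightarrow> \<not> set q \<subseteq> U"] by blast
        then have "EV (\<lambda>r. \<forall>q. cr r u = Some q \<longrightarrow> \<not> set q \<subseteq> U)"
          by (rule EV_mono) (simp add: cr_nd[OF und])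
        then show ?thesis unfolding ssettled_def using EV_conj[OF a] by blast
      qed
    qed
  qed
qed


lemma lexc: "lex_less (a # xs) (b # ys) \<longleftrightarrow> a < b \<or> a = b \<and> lex_less xs ys"
  unfolding lex_less_def by simp

lemma CF_gen: assumes "u \<notin> S \<or> m \<noteq> SecFirst \<or> (\<forall>q\<in>AV r u. \<not> set q \<subseteq> S)"
  shows "CF UNIV r u"
  unfolding CF_def
proof (intro ballI impI)
  fix p q assume pq: "p \<in> AV r u" "q \<in> AV r u" "(set p \<subseteq> UNIV \<and> cp (p!1) u) \<and> \<not>(set q \<subseteq> UNIV \<and> cp (q!1) u)"
  have sp: "u \<in> S \<and> m = SecFirst \<Longrightarrow> \<not> secure_route S p \<and> \<not> secure_route S q"
    using assms pq(1,2) unfolding secure_route_def by blast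
  have c0: "lp_class cp pr u p = 0" using pq(3) by (simp add: lp_class_def)
  have c1: "lp_class cp pr u q > 0" using pq(3) by (simp add: lp_class_def)
  show "bet u p q" unfolding better_def
    apply (rule disjI1)
    unfolding rank_key_def Let_def
    using c0 c1 sp by (cases m) (simp_all add: lexc)
qed

lemma CF_S: assumes "u \<in> S" "m = SecFirst" shows "CF S r u"
  unfolding CF_def
proof (intro ballI impI)
  fix p q assume pq: "p \<in> AV r u" "q \<in> AV r u" "(set p \<subseteq> S \<and> cp (p!1) u) \<and> \<not>(set q \<subseteq> S \<and> cp (q!1) u)"
  have c0: "lp_class cp pr u p = 0" using pq(3) by (simp add: lp_class_def)
  have s0: "secure_route S p" using pq(3) by (simp add: secure_route_def)
  have c1: "\<not> secure_route S q \<or> lp_class cp pr u q > 0" using pq(3) by (simp add: lp_class_def secure_route_def)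
  show "bet u p q" unfolding better_def
    apply (rule disjI1)
    unfolding rank_key_def Let_def
    using c0 c1 s0 assms by (auto simp add: lexc)
qed

lemma PF_S: assumes "u \<in> S" "m = SecFirst" shows "PF S r u"
  unfolding PF_def
proof (intro ballI impI)
  fix p q assume pq: "p \<in> AV r u" "q \<in> AV r u" "set p \<subseteq> S \<and> \<not> set q \<subseteq> S"
  have s0: "secure_route S p" "\<not> secure_route S q" using pq(3) by (simp_all add: secure_route_def)
  show "bet u p q" unfolding better_def
    apply (rule disjI1)
    unfolding rank_key_def Let_def
    using s0 assms by (simp add: lexc)
qed

lemma PF_UNIV: "PF UNIV r u" unfolding PF_def by simp

lemma all_fixed: "u \<in> V \<Longrightarrow> \<exists>v. FX u v"
proof -
  have SS: "\<forall>u\<in>V. m = SecFirst \<longrightarrow> ssettled S u"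
  proof (intro ballI impI)
    fix u assume u: "u \<in> V" and m: "m = SecFirst"
    have h1: "\<forall>u\<in>V - {d}. u \<in> S \<longrightarrow> (\<exists>v. FX u v) \<or> EV (\<lambda>r. CF S r u)"
    proof (intro ballI impI disjI2)
      fix u assume "u \<in> S" then show "EV (\<lambda>r. CF S r u)" by (intro EV_I CF_S m)
    qed
    have "\<forall>c\<in>V. csettled S c" using phaseC[OF h1] by blast
    moreover have "\<forall>u\<in>V - {d}. u \<in> S \<longrightarrow> EV (\<lambda>r. PF S r u)"
    proof (intro ballI impI)
      fix u assume "u \<in> S" then show "EV (\<lambda>r. PF S r u)" by (intro EV_I PF_S m)
    qed
    ultimately show "ssettled S u" using phaseP[of S] u by blast
  qed
  have HC: "\<forall>u\<in>V - {d}. u \<in> UNIV \<longrightarrow> (\<exists>v. FX u v) \<or> EV (\<lambda>r. CF UNIV r u)"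
  proof (intro ballI impI)
    fix u assume u: "u \<in> V - {d}"
    show "(\<exists>v. FX u v) \<or> EV (\<lambda>r. CF UNIV r u)"
    proof (cases "u \<in> S \<and> m = SecFirst")
      case False
      then have "EV (\<lambda>r. CF UNIV r u)" by (intro EV_I CF_gen) blast
      then show ?thesis by blast
    next
      case True
      then have "ssettled S u" using SS u by blast
      then show ?thesis unfolding ssettled_def
      proof (elim disjE)
        assume "EV (\<lambda>r. (\<forall>q\<in>AV r u. \<not> set q \<subseteq> S) \<and> (\<forall>p. cr r u = Some p \<longrightarrow> \<not> set p \<subseteq> S))"
        then have "EV (\<lambda>r. CF UNIV r u)" by (rule EV_mono) (rule CF_gen, blast)
        then show ?thesis by blast
      qed blast
    qed
  qed
  have "\<forall>c\<in>V. csettled UNIV c" using phaseC[OF HC] by blast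
  moreover have "\<forall>u\<in>V - {d}. u \<in> UNIV \<longrightarrow> EV (\<lambda>r. PF UNIV r u)"
    by (intro ballI impI EV_I PF_UNIV)
  moreover assume "u \<in> V"
  ultimately have "ssettled UNIV u" using phaseP[of UNIV] by blast
  then show "\<exists>v. FX u v" unfolding ssettled_def
  proof (elim disjE)
    assume "EV (\<lambda>r. (\<forall>q\<in>AV r u. \<not> set q \<subseteq> UNIV) \<and> (\<forall>p. cr r u = Some p \<longrightarrow> \<not> set p \<subseteq> UNIV))"
    then have "FX u None" unfolding FX_def by (rule EV_mono) simp
    then show ?thesis by blast
  qed
qed


definition rstar where "rstar u = (if u \<in> V \<and> u \<noteq> d then (THE v. FX u v) else None)"

lemma EV_rstar: "EV (\<lambda>r. r = rstar)"
proof -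
  have "\<forall>u\<in>V. EV (\<lambda>r. cr r u = (THE v. FX u v))"
  proof
    fix u assume "u \<in> V"
    then obtain v where "FX u v" using all_fixed by blast
    then have "FX u (THE v. FX u v)" using FX_unique by (metis theI)
    then show "EV (\<lambda>r. cr r u = (THE v. FX u v))" unfolding FX_def .
  qed
  then have "EV (\<lambda>r. \<forall>u\<in>V. cr r u = (THE v. FX u v))" by (rule EV_ball[OF finV])
  then show ?thesis
  proof (rule EV_mono)
    fix r assume r: "Inv r" "\<forall>u\<in>V. cr r u = (THE v. FX u v)"
    show "r = rstar"
    proof
      fix u
      show "r u = rstar u"
      proof (cases "u \<in> V \<and> u \<noteq> d")
        case True then show ?thesis using r(2) cr_nd unfolding rstar_def by auto
      next
        case False
        then have "r u = None" using r(1) unfolding Inv_def by (cases "r u") auto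
        then show ?thesis using False unfolding rstar_def by auto
      qed
    qed
  qed
qed

lemma conv: "good r0 \<sigma> \<Longrightarrow> \<exists>T. \<forall>t\<ge>T. X r0 \<sigma> t = rstar"
  using EV_rstar unfolding EV_def eventually_sequentially by blast

lemma rstar_stable: "stable_state V cp pr d S m tb rstar"
proof -
  obtain T where T: "\<forall>t\<ge>T. X (\<lambda>_. None) (\<lambda>_. UNIV) t = rstar" using conv[OF good_canon] by blast
  have a: "X (\<lambda>_. None) (\<lambda>_. UNIV) T = rstar" "X (\<lambda>_. None) (\<lambda>_. UNIV) (Suc T) = rstar" using T le_SucI by blast+
  show ?thesis unfolding stable_state_def
  proof
    fix s
    show "rstar s = (if s \<in> V \<and> s \<noteq> d then sel rstar s else None)"
    proof (cases "s \<in> V \<and> s \<noteq> d")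
      case True
      have "X (\<lambda>_. None) (\<lambda>_. UNIV) (Suc T) s = sel (X (\<lambda>_. None) (\<lambda>_. UNIV) T) s" using True by simp
      then have "rstar s = sel rstar s" by (simp only: a)
      then show ?thesis using True by simp
    next
      case False then show ?thesis unfolding rstar_def by auto
    qed
  qed
qed

end

theorem theorem1:
  fixes V :: "'v set" and cp pr :: "'v \<Rightarrow> 'v \<Rightarrow> bool" and d :: 'v and S :: "'v set"
    and m :: sec_model and tb :: "'v \<Rightarrow> 'v list \<Rightarrow> 'v list \<Rightarrow> bool"
  assumes "as_graph V cp pr" and "d \<in> V" and "S \<subseteq> V"
    and "\<forall>s. strict_total (tb s)"
  shows "\<exists>!r. stable_state V cp pr d S m tb r
           \<and> (\<forall>r0 \<sigma>. routing_state V cp pr d r0 \<and> fair V d \<sigma> \<longrightarrow>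
                 (\<exists>T. \<forall>t\<ge>T. run V cp pr d S m tb r0 \<sigma> t = r))"
proof -
  interpret b: bgp V cp pr d S m tb using assms by unfold_locales auto
  show ?thesis
  proof (rule ex1I[of _ b.rstar])
    show "stable_state V cp pr d S m tb b.rstar
           \<and> (\<forall>r0 \<sigma>. routing_state V cp pr d r0 \<and> fair V d \<sigma> \<longrightarrow>
                 (\<exists>T. \<forall>t\<ge>T. run V cp pr d S m tb r0 \<sigma> t = b.rstar))"
      using b.rstar_stable b.conv unfolding b.good_def by blast
  next
    fix r assume "stable_state V cp pr d S m tb r
           \<and> (\<forall>r0 \<sigma>. routing_state V cp pr d r0 \<and> fair V d \<sigma> \<longrightarrow>
                 (\<exists>T. \<forall>t\<ge>T. run V cp pr d S m tb r0 \<sigma> t = r))"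
    then obtain T1 where T1: "\<forall>t\<ge>T1. run V cp pr d S m tb (\<lambda>_. None) (\<lambda>_. UNIV) t = r"
      using b.good_canon unfolding b.good_def by blast
    obtain T2 where T2: "\<forall>t\<ge>T2. run V cp pr d S m tb (\<lambda>_. None) (\<lambda>_. UNIV) t = b.rstar"
      using b.conv[OF b.good_canon] by blast
    show "r = b.rstar" using T1 T2 by (metis max.cobounded1 max.cobounded2)
  qed
qed

end
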